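(* Let $\Sigma_{\mathsf f}\in\mathbb R^{n\times n}$ be symmetric positive definite and $\mu_{\mathsf f}\in\mathbb R^n$. Consider the system, noise model and affine disturbance feedback policy described in the context, with decision space $\mathscr D$. Then the set of $(\bar{\bm u},\bm{\mathcal K})\in\mathscr D$ for which the resulting closed-loop system satisfies both $\mathrm{var}_x(T)\preceq\Sigma_{\mathsf f}$ (i.e. $\Sigma_{\mathsf f}-\mathrm{var}_x(T)$ is positive semidefinite) and $\mu_x(T)=\mu_{\mathsf f}$ is a convex subset of $\mathscr D$.
   Context: System: $x(t+1)=A(t)x(t)+B(t)u(t)+w(t)$, $t\in\{0,\dots,T-1\}$, $x(0)=x_0\sim\mathcal N(\mu_0,\Sigma_0)$ with $\Sigma_0$ symmetric positive definite; $w(0),\dots,w(T-1)$ i.i.d. Gaussian with mean $0$ and covariance $W$ (symmetric positive semidefinite), uncorrelated across time, and $\mathbb E[x_0w(t)^\top]=0$. Policy: $u(0)=\bar u(0)$, $u(t)=\bar u(t)+\sum_{\tau=0}^{t-1}K_{(t-1,\tau)}w(\tau)$ for $t\in\{1,\dots,T-1\}$, with $K_{(t-1,\tau)}\in\mathbb R^{m\times n}$. $\bar{\bm u}$ is the vertical concatenation of $\bar u(0),\dots,\bar u(T-1)$; $\bm{\mathcal K}:=\begin{bmatrix}0&0\\ \mathbf K&0\end{bmatrix}\in\mathbb R^{Tm\times Tn}$ with $\mathbf K$ block lower triangular having $(i,j)$ block $K_{(i,j)}$, $0\le j\le i\le T-2$, so that the stacked input is $\bm u=\bar{\bm u}+\bm{\mathcal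 K}\bm w$ with $\bm w$ the concatenation of $w(0),\dots,w(T-1)$. $\mathscr D$ is the set of all pairs $(\bar{\bm u},\bm{\mathcal K})\in\mathbb R^{Tm}\times\mathbb R^{Tm\times Tn}$ with $\bm{\mathcal K}$ of this structure. $\mu_x(T)=\mathbb E[x(T)]$ and $\mathrm{var}_x(T)=\mathbb E[(x(T)-\mu_x(T))(x(T)-\mu_x(T))^\top]$; $\preceq$ is the Loewner order. *)

theory Defs
  imports "HOL-Analysis.Analysis" "HOL-Probability.Probability"
begin

(* Matrices: real^'c^'r is an 'r x 'c matrix (rows indexed by 'r). *)

definition outer :: "real^'n \<Rightarrow> real^'k \<Rightarrow> real^'k^'n" where
  "outer u v = (\<chi> i j. u $ i * v $ j)"

definition psd :: "real^'n^'n \<Rightarrow> bool" where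
  "psd P \<longleftrightarrow> (\<forall>v. 0 \<le> v \<bullet> (P *v v))"

definition sym_psd :: "real^'n^'n \<Rightarrow> bool" where
  "sym_psd P \<longleftrightarrow> transpose P = P \<and> psd P"

definition sym_pd :: "real^'n^'n \<Rightarrow> bool" where
  "sym_pd P \<longleftrightarrow> transpose P = P \<and> (\<forall>v. v \<noteq> 0 \<longrightarrow> 0 < v \<bullet> (P *v v))"

definition loewner_le :: "real^'n^'n \<Rightarrow> real^'n^'n \<Rightarrow> bool" where
  "loewner_le P Q \<longleftrightarrow> psd (Q - P)"

(* X is a Gaussian random vector N(mu, S): every linear functional a.X is
   normal with mean a.mu and variance a' S a (degenerate = a.s. constant if the
   variance is 0).  (Cramer-Wold characterisation of the multivariate normal.) *)
definition gaussian_vec :: "'a measure \<Rightarrow> ('a \<Rightarrow> real^'n) \<Rightarrow> real^'n \<Rightarrow> real^'n^'n \<Rightarrow> bool" where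
  "gaussian_vec M X mu S \<longleftrightarrow> X \<in> borel_measurable M \<and>
     (\<forall>a. let m = a \<bullet> mu; s = a \<bullet> (S *v a) in
        if s = 0 then (AE \<omega> in M. a \<bullet> X \<omega> = m)
        else distributed M lborel (\<lambda>\<omega>. a \<bullet> X \<omega>) (normal_density m (sqrt s)))"

(* Input of the affine disturbance feedback policy:
   u(t) = ubar(t) + sum_{tau<t} K_(t-1,tau) w(tau)  (empty sum for t = 0) *)
definition policy_input ::
  "(nat \<Rightarrow> real^'m) \<Rightarrow> (nat \<Rightarrow> nat \<Rightarrow> real^'n^'m) \<Rightarrow> (nat \<Rightarrow> 'a \<Rightarrow> real^'n) \<Rightarrow> nat \<Rightarrow> 'a \<Rightarrow> real^'m" where
  "policy_input ub K w t \<omega> = ub t + (\<Sum>\<tau><t. K (t - 1) \<tau> *v w \<tau> \<omega>)"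

primrec traj ::
  "(nat \<Rightarrow> real^'n^'n) \<Rightarrow> (nat \<Rightarrow> real^'m^'n) \<Rightarrow> ('a \<Rightarrow> real^'n) \<Rightarrow> (nat \<Rightarrow> 'a \<Rightarrow> real^'n)
   \<Rightarrow> (nat \<Rightarrow> real^'m) \<Rightarrow> (nat \<Rightarrow> nat \<Rightarrow> real^'n^'m) \<Rightarrow> nat \<Rightarrow> 'a \<Rightarrow> real^'n" where
  "traj A B x0 w ub K 0 \<omega> = x0 \<omega>"
| "traj A B x0 w ub K (Suc t) \<omega> =
     A t *v traj A B x0 w ub K t \<omega> + B t *v policy_input ub K w t \<omega> + w t \<omega>"

definition mean_x where
  "mean_x M A B x0 w ub K t = integral\<^sup>L M (\<lambda>\<omega>. traj A B x0 w ub K t \<omega>)"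

definition var_x where
  "var_x M A B x0 w ub K t =
     integral\<^sup>L M (\<lambda>\<omega>. outer (traj A B x0 w ub K t \<omega> - mean_x M A B x0 w ub K t)
                            (traj A B x0 w ub K t \<omega> - mean_x M A B x0 w ub K t))"

(* Decision space D: ubar(0..T-1) and K_(i,j) for 0 <= j <= i <= T-2;
   represented canonically by functions vanishing outside these index ranges. *)
definition decision_space :: "nat \<Rightarrow> ((nat \<Rightarrow> real^'m) \<times> (nat \<Rightarrow> nat \<Rightarrow> real^'n^'m)) set" where
  "decision_space T = {(ub, K). (\<forall>t. T \<le> t \<longrightarrow> ub t = 0) \<and>
                                (\<forall>i j. \<not> (j \<le> i \<and> i + 2 \<le> T) \<longrightarrow> K i j = 0)}"

definition dec_convex :: "((nat \<Rightarrow> real^'m) \<times> (nat \<Rightarrow> nat \<Rightarrow> real^'n^'m)) set \<Rightarrow> bool" where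
  "dec_convex S \<longleftrightarrow> (\<forall>ub1 K1 ub2 K2 \<theta>::real. (ub1, K1) \<in> S \<longrightarrow> (ub2, K2) \<in> S \<longrightarrow> 0 \<le> \<theta> \<longrightarrow> \<theta> \<le> 1 \<longrightarrow>
      ((\<lambda>t. \<theta> *\<^sub>R ub1 t + (1 - \<theta>) *\<^sub>R ub2 t),
       (\<lambda>i j. \<theta> *\<^sub>R K1 i j + (1 - \<theta>) *\<^sub>R K2 i j)) \<in> S)"

end

theory Submission
  imports Defs
begin

definition L2 :: "'a measure \<Rightarrow> ('a \<Rightarrow> real) \<Rightarrow> bool" where
  "L2 M f \<longleftrightarrow> f \<in> borel_measurable M \<and> integrable M (\<lambda>x. (f x)^2)"

lemma L2_mult_integrable:
  assumes "L2 M f" "L2 M g" shows "integrable M (\<lambda>x. f x * g x)"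
proof (rule Bochner_Integration.integrable_bound[of M "\<lambda>x. (f x)^2 + (g x)^2"])
  show "integrable M (\<lambda>x. (f x)^2 + (g x)^2)" using assms unfolding L2_def by auto
  show "(\<lambda>x. f x * g x) \<in> borel_measurable M" using assms unfolding L2_def by auto
  show "AE x in M. norm (f x * g x) \<le> norm ((f x)^2 + (g x)^2)"
  proof (intro AE_I2)
    fix x
    have e: "(\<bar>f x\<bar> - \<bar>g x\<bar>)^2 = (f x)^2 + (g x)^2 - 2 * \<bar>f x * g x\<bar>"
      by (simp add: power2_eq_square algebra_simps abs_mult)
    have "0 \<le> (\<bar>f x\<bar> - \<bar>g x\<bar>)^2" by simp
    then have "\<bar>f x * g x\<bar> \<le> (f x)^2 + (g x)^2" unfolding e by simp
    then show "norm (f x * g x) \<le> norm ((f x)^2 + (g x)^2)" by simp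
  qed
qed

lemma L2_add: assumes "L2 M f" "L2 M g" shows "L2 M (\<lambda>x. f x + g x)"
proof -
  have "integrable M (\<lambda>x. (f x)^2 + 2 * (f x * g x) + (g x)^2)"
    using assms L2_mult_integrable[OF assms] unfolding L2_def by auto
  moreover have "(\<lambda>x. (f x + g x)^2) = (\<lambda>x. (f x)^2 + 2 * (f x * g x) + (g x)^2)"
    by (simp add: power2_sum mult.assoc add_ac)
  moreover have "(\<lambda>x. f x + g x) \<in> borel_measurable M"
    using assms unfolding L2_def by (auto intro: borel_measurable_add)
  ultimately show ?thesis unfolding L2_def by simp
qed

lemma L2_cmult: assumes "L2 M f" shows "L2 M (\<lambda>x. c * f x)"
proof -
  have [measurable]: "f \<in> borel_measurable M" using assms unfolding L2_def by simp
  have "(\<lambda>x. c * f x) \<in> borel_measurable M" by measurable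
  then show ?thesis using assms unfolding L2_def by (simp add: power_mult_distrib)
qed

lemma L2_const: assumes "finite_measure M" shows "L2 M (\<lambda>x. c)"
  using assms unfolding L2_def by (simp add: finite_measure.integrable_const)

lemma L2_sum: assumes "finite_measure M" "finite I" "\<And>i. i \<in> I \<Longrightarrow> L2 M (f i)"
  shows "L2 M (\<lambda>x. \<Sum>i\<in>I. f i x)"
  using assms(2,3)
proof (induction I rule: finite_induct)
  case empty then show ?case using L2_const[OF assms(1), of 0] by simp
next
  case (insert a F) then show ?case by (simp add: L2_add)
qed

lemma L2_diff: assumes "L2 M f" "L2 M g" shows "L2 M (\<lambda>x. f x - g x)"
  using L2_add[OF assms(1) L2_cmult[OF assms(2), of "-1"]] by simp

definition vL2 :: "'a measure \<Rightarrow> ('a \<Rightarrow> real^'n) \<Rightarrow> bool" where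
  "vL2 M X \<longleftrightarrow> (\<forall>i. L2 M (\<lambda>x. X x $ i))"

lemma vL2_add: "vL2 M X \<Longrightarrow> vL2 M Y \<Longrightarrow> vL2 M (\<lambda>x. X x + Y x)"
  unfolding vL2_def by (simp add: L2_add)

lemma vL2_diff: "vL2 M X \<Longrightarrow> vL2 M Y \<Longrightarrow> vL2 M (\<lambda>x. X x - Y x)"
  unfolding vL2_def by (simp add: L2_diff)

lemma vL2_const: "finite_measure M \<Longrightarrow> vL2 M (\<lambda>x. c)"
  unfolding vL2_def by (simp add: L2_const)

lemma vL2_mat: assumes "finite_measure M" "vL2 M X" shows "vL2 M (\<lambda>x. A *v X x)"
  unfolding vL2_def matrix_vector_mult_def
  using assms by (auto simp: vL2_def intro!: L2_sum L2_cmult)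

lemma vL2_sum: assumes "finite_measure M" "finite I" "\<And>i. i \<in> I \<Longrightarrow> vL2 M (X i)"
  shows "vL2 M (\<lambda>x. \<Sum>i\<in>I. X i x)"
  using assms unfolding vL2_def by (auto intro!: L2_sum)

lemma vL2_inner: assumes "finite_measure M" "vL2 M X" shows "L2 M (\<lambda>x. v \<bullet> X x)"
  unfolding inner_vec_def using assms by (auto simp: vL2_def intro!: L2_sum L2_cmult)

lemma bounded_linear_axis: "bounded_linear (axis i :: 'b::real_normed_vector \<Rightarrow> 'b^'k)"
proof (rule bounded_linear_intro[where K=1])
  show "axis i (x + y) = axis i x + axis i y" for x y :: 'b
    by (simp add: vec_eq_iff axis_def)
  show "axis i (r *\<^sub>R x) = r *\<^sub>R axis i x" for r and x :: 'b
    by (simp add: vec_eq_iff axis_def)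
  show "norm (axis i x) \<le> norm x * 1" for x :: 'b
  proof -
    have "norm (axis i x) \<le> (\<Sum>j\<in>UNIV. \<bar>norm (axis i x $ j)\<bar>)"
      unfolding norm_vec_def by (rule L2_set_le_sum_abs)
    also have "\<dots> = (\<Sum>j\<in>UNIV. if j = i then norm x else 0)"
      by (rule sum.cong) (auto simp: axis_def)
    also have "\<dots> = norm x" by (rule trans[OF sum.delta]) auto
    finally show ?thesis by simp
  qed
qed

lemma integrable_vec:
  fixes f :: "'a \<Rightarrow> 'b::euclidean_space^'k"
  assumes "\<And>i. integrable M (\<lambda>x. f x $ i)"
  shows "integrable M f"
proof -
  have e: "f x = (\<Sum>i\<in>UNIV. axis i (f x $ i))" for x
  proof (subst vec_eq_iff, rule allI)
    fix j
    have "(\<Sum>i\<in>UNIV. axis i (f x $ i)) $ j = (\<Sum>i\<in>UNIV. axis i (f x $ i) $ j)"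
      by (rule sum_component)
    also have "\<dots> = (\<Sum>i\<in>UNIV. if i = j then f x $ j else 0)"
      by (rule sum.cong) (auto simp: axis_def)
    also have "\<dots> = f x $ j" by (rule trans[OF sum.delta]) auto
    finally show "f x $ j = (\<Sum>i\<in>UNIV. axis i (f x $ i)) $ j" by simp
  qed
  have I: "integrable M (\<lambda>x. \<Sum>i\<in>UNIV. axis i (f x $ i))"
  proof (rule Bochner_Integration.integrable_sum)
    fix i show "integrable M (\<lambda>x. axis i (f x $ i))"
      using integrable_bounded_linear[OF bounded_linear_axis[of i] assms[of i]] by simp
  qed
  have ef: "f = (\<lambda>x. \<Sum>i\<in>UNIV. axis i (f x $ i))"
    by (rule ext) (rule e)
  show ?thesis by (subst ef) (rule I)
qed

lemma integral_vec_nth: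
  fixes f :: "'a \<Rightarrow> 'b::euclidean_space^'k"
  assumes "integrable M f"
  shows "(integral\<^sup>L M f) $ i = integral\<^sup>L M (\<lambda>x. f x $ i)"
  using integral_bounded_linear[OF bounded_linear_vec_nth assms, of i] by simp

lemma vL2_integrable:
  assumes "finite_measure M" "vL2 M X" shows "integrable M X"
proof (rule integrable_vec)
  fix i
  have "L2 M (\<lambda>x. X x $ i)" using assms(2) unfolding vL2_def by blast
  then show "integrable M (\<lambda>x. X x $ i)" unfolding L2_def
    using finite_measure.square_integrable_imp_integrable[OF assms(1)] by blast
qed


lemma quad_integral:
  fixes Z :: "'a \<Rightarrow> real^'n"
  assumes "finite_measure M" "vL2 M Z"
  shows "v \<bullet> ((integral\<^sup>L M (\<lambda>x. outer (Z x) (Z x))) *v v) = integral\<^sup>L M (\<lambda>x. (v \<bullet> Z x)^2)"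
proof -
  have ij: "integrable M (\<lambda>x. outer (Z x) (Z x) $ i $ j)" for i j
  proof -
    have "L2 M (\<lambda>x. Z x $ i)" "L2 M (\<lambda>x. Z x $ j)" using assms(2) unfolding vL2_def by blast+
    then have "integrable M (\<lambda>x. Z x $ i * Z x $ j)" by (rule L2_mult_integrable)
    then show ?thesis unfolding outer_def by simp
  qed
  have int: "integrable M (\<lambda>x. outer (Z x) (Z x))"
  proof (rule integrable_vec)
    fix i show "integrable M (\<lambda>x. outer (Z x) (Z x) $ i)"
      by (rule integrable_vec) (rule ij)
  qed
  have bl: "bounded_linear (\<lambda>P::real^'n^'n. v \<bullet> (P *v v))"
    unfolding linear_conv_bounded_linear[symmetric]
  proof (rule linearI)
    fix b1 b2 :: "real^'n^'n"
    show "v \<bullet> ((b1 + b2) *v v) = v \<bullet> (b1 *v v) + v \<bullet> (b2 *v v)"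
      by (simp only: matrix_vector_mult_add_rdistrib inner_add_right)
  next
    fix r :: real and b :: "real^'n^'n"
    show "v \<bullet> ((r *\<^sub>R b) *v v) = r *\<^sub>R (v \<bullet> (b *v v))"
      by (simp only: scaleR_matrix_vector_assoc[symmetric] inner_scaleR_right real_scaleR_def)
  qed
  have pw: "v \<bullet> (outer z z *v v) = (v \<bullet> z)^2" for z :: "real^'n"
  proof -
    have c: "outer z z *v v = (z \<bullet> v) *\<^sub>R z"
    proof (subst vec_eq_iff, rule allI)
      fix i
      have "(outer z z *v v) $ i = (\<Sum>j\<in>UNIV. (z $ i * z $ j) * v $ j)"
        by (simp add: outer_def matrix_vector_mult_def)
      also have "\<dots> = z $ i * (\<Sum>j\<in>UNIV. z $ j * v $ j)"
        by (simp add: sum_distrib_left mult.assoc)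
      also have "\<dots> = ((z \<bullet> v) *\<^sub>R z) $ i"
        by (simp add: inner_vec_def)
      finally show "(outer z z *v v) $ i = ((z \<bullet> v) *\<^sub>R z) $ i" .
    qed
    show ?thesis unfolding c by (simp add: inner_commute power2_eq_square)
  qed
  show ?thesis
    using integral_bounded_linear[OF bl int] by (simp add: pw)
qed

lemma gaussian_vL2:
  assumes P: "prob_space M" and G: "gaussian_vec M X mu S" and S: "psd S"
  shows "vL2 M X"
  unfolding vL2_def L2_def
proof (intro allI conjI)
  fix i
  interpret prob_space M by fact
  have Xm: "X \<in> borel_measurable M" using G unfolding gaussian_vec_def by simp
  then show meas: "(\<lambda>x. X x $ i) \<in> borel_measurable M"
    using measurable_compose[OF Xm borel_measurable_nth] by simp
  define a :: "real^'b" where "a = axis i 1"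
  have ax: "a \<bullet> y = y $ i" for y :: "real^'b" by (simp add: a_def inner_axis' )
  define m where "m = a \<bullet> mu"
  define s where "s = a \<bullet> (S *v a)"
  have s0: "0 \<le> s" using S unfolding psd_def s_def by simp
  have G': "if s = 0 then (AE \<omega> in M. a \<bullet> X \<omega> = m)
        else distributed M lborel (\<lambda>\<omega>. a \<bullet> X \<omega>) (normal_density m (sqrt s))"
    using G unfolding gaussian_vec_def m_def s_def Let_def by blast
  show "integrable M (\<lambda>x. (X x $ i)^2)"
  proof (cases "s = 0")
    case True
    then have "AE \<omega> in M. X \<omega> $ i = m" using G' by (simp add: ax)
    then have "AE \<omega> in M. (X \<omega> $ i)^2 = m^2" by auto
    moreover have "integrable M (\<lambda>\<omega>. m^2)" by simp
    ultimately show ?thesis using meas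
      by (subst integrable_cong_AE[where g="\<lambda>\<omega>. m^2"]) auto
  next
    case False
    then have D: "distributed M lborel (\<lambda>\<omega>. X \<omega> $ i) (normal_density m (sqrt s))"
      using G' by (simp add: ax)
    have sp: "0 < sqrt s" using False s0 by simp
    have e: "(\<lambda>x. normal_density m (sqrt s) x * x^2) = (\<lambda>x. normal_density m (sqrt s) x * (x - m)^2
        + 2 * m * (normal_density m (sqrt s) x * (x - m)^1) + m^2 * (normal_density m (sqrt s) x * (x - m)^0))"
      by (auto simp: fun_eq_iff power2_eq_square algebra_simps)
    have "integrable lborel (\<lambda>x. normal_density m (sqrt s) x * x^2)"
    proof -
      have i2: "integrable lborel (\<lambda>x. normal_density m (sqrt s) x * (x - m)^2)"
        by (rule integrable_normal_moment[OF sp])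
      have i1: "integrable lborel (\<lambda>x. normal_density m (sqrt s) x * (x - m)^1)"
        by (rule integrable_normal_moment[OF sp])
      have i0: "integrable lborel (\<lambda>x. normal_density m (sqrt s) x * (x - m)^0)"
        by (rule integrable_normal_moment[OF sp])
      show ?thesis unfolding e
        by (intro Bochner_Integration.integrable_add integrable_mult_right i0 i1 i2)
    qed
    then show ?thesis
      using distributed_integrable[OF D, of "\<lambda>x. x^2"] by simp
  qed
qed

lemma policy_comb:
  "policy_input (\<lambda>t. \<theta> *\<^sub>R ub1 t + (1-\<theta>) *\<^sub>R ub2 t) (\<lambda>i j. \<theta> *\<^sub>R K1 i j + (1-\<theta>) *\<^sub>R K2 i j) w t \<omega>
   = \<theta> *\<^sub>R policy_input ub1 K1 w t \<omega> + (1-\<theta>) *\<^sub>R policy_input ub2 K2 w t \<omega>"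
proof -
  have mvc: "(\<theta> *\<^sub>R P + (1-\<theta>) *\<^sub>R Q) *v x = \<theta> *\<^sub>R (P *v x) + (1-\<theta>) *\<^sub>R (Q *v x)"
    for P Q :: "real^'n^'m" and x
    by (simp add: matrix_vector_mult_add_rdistrib scaleR_matrix_vector_assoc[symmetric])
  show ?thesis
    unfolding policy_input_def
    by (simp only: mvc sum.distrib scaleR_sum_right[symmetric]) (simp add: scaleR_right_distrib add_ac)
qed

lemma traj_comb:
  "traj A B x0 w (\<lambda>t. \<theta> *\<^sub>R ub1 t + (1-\<theta>) *\<^sub>R ub2 t) (\<lambda>i j. \<theta> *\<^sub>R K1 i j + (1-\<theta>) *\<^sub>R K2 i j) t \<omega>
   = \<theta> *\<^sub>R traj A B x0 w ub1 K1 t \<omega> + (1-\<theta>) *\<^sub>R traj A B x0 w ub2 K2 t \<omega>"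
proof (induction t)
  case 0 then show ?case by (simp add: scaleR_left_distrib[symmetric])
next
  case (Suc t)
  have lin: "P *v (\<theta> *\<^sub>R x + (1-\<theta>) *\<^sub>R y) = \<theta> *\<^sub>R (P *v x) + (1-\<theta>) *\<^sub>R (P *v y)"
    for P :: "real^'k^'l" and x y
    by (simp add: matrix_vector_right_distrib matrix_vector_mult_scaleR)
  have ww: "\<theta> *\<^sub>R z + (1-\<theta>) *\<^sub>R z = z" for z :: "real^'n"
    by (simp add: scaleR_left_distrib[symmetric])
  have fin: "(\<theta> *\<^sub>R p + (1-\<theta>) *\<^sub>R p') + (\<theta> *\<^sub>R q + (1-\<theta>) *\<^sub>R q') + z
      = \<theta> *\<^sub>R (p + q + z) + (1-\<theta>) *\<^sub>R (p' + q' + z)" for p p' q q' z :: "real^'n"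
  proof -
    have "\<theta> *\<^sub>R (p + q + z) + (1-\<theta>) *\<^sub>R (p' + q' + z)
       = (\<theta> *\<^sub>R p + (1-\<theta>) *\<^sub>R p') + (\<theta> *\<^sub>R q + (1-\<theta>) *\<^sub>R q') + (\<theta> *\<^sub>R z + (1-\<theta>) *\<^sub>R z)"
      by (simp only: scaleR_right_distrib add_ac)
    then show ?thesis by (simp only: ww)
  qed
  show ?case
    by (simp only: traj.simps Suc policy_comb lin fin)
qed

lemma traj_vL2:
  assumes fm: "finite_measure M" and Zinit: "vL2 M Zinit" and wl: "\<And>t. t < T \<Longrightarrow> vL2 M (w t)"
  shows "t \<le> T \<Longrightarrow> vL2 M (traj A B Zinit w ub K t)"
proof (induction t)
  case 0 then show ?case using Zinit by simp
next
  case (Suc t)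
  have pi: "vL2 M (policy_input ub K w t)"
    unfolding policy_input_def
    using Suc.prems by (intro vL2_add vL2_const fm vL2_sum vL2_mat wl) auto
  have "vL2 M (\<lambda>\<omega>. A t *v traj A B Zinit w ub K t \<omega> + B t *v policy_input ub K w t \<omega> + w t \<omega>)"
    using Suc pi by (intro vL2_add vL2_mat fm wl) auto
  then show ?case by simp
qed

theorem proposition4:
  fixes M :: "'a measure" and T :: nat
    and A :: "nat \<Rightarrow> real^'n^'n" and B :: "nat \<Rightarrow> real^'m^'n"
    and x0 :: "'a \<Rightarrow> real^'n" and w :: "nat \<Rightarrow> 'a \<Rightarrow> real^'n"
    and \<mu>0 \<mu>f :: "real^'n" and \<Sigma>0 W \<Sigma>f :: "real^'n^'n"
  assumes "prob_space M"
    and "sym_pd \<Sigma>f"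
    and "sym_pd \<Sigma>0"
    and "sym_psd W"
    and "gaussian_vec M x0 \<mu>0 \<Sigma>0"
    and "\<forall>t<T. gaussian_vec M (w t) 0 W"
    and "prob_space.indep_vars M (\<lambda>_. borel) w {..<T}"
    and "\<forall>t<T. integral\<^sup>L M (\<lambda>\<omega>. outer (x0 \<omega>) (w t \<omega>)) = 0"
  shows "dec_convex {(ub, K) \<in> decision_space T.
                       loewner_le (var_x M A B x0 w ub K T) \<Sigma>f \<and>
                       mean_x M A B x0 w ub K T = \<mu>f}"
proof -
  interpret P: prob_space M by fact
  have fm: "finite_measure M" by (rule P.finite_measure_axioms)
  have psdW: "psd W" using assms(4) unfolding sym_psd_def by simp
  have psd0: "psd \<Sigma>0" using assms(3) unfolding sym_pd_def psd_def
    by (metis inner_zero_left order_le_less)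
  have x0L: "vL2 M x0" using gaussian_vL2[OF assms(1) assms(5) psd0] .
  have wL: "vL2 M (w t)" if "t < T" for t
  proof -
    have "gaussian_vec M (w t) 0 W" using assms(6) that by simp
    then show ?thesis by (rule gaussian_vL2[OF assms(1) _ psdW])
  qed
  have YL: "vL2 M (traj A B x0 w ub K T)" for ub K
    using traj_vL2[where M=M and Zinit=x0 and T=T and w=w and t=T and A=A and B=B and ub=ub and K=K] fm x0L wL
    by blast
  show ?thesis unfolding dec_convex_def
  proof (intro allI impI)
    fix ub1 K1 ub2 K2 and \<theta> :: real
    assume h1: "(ub1, K1) \<in> {(ub, K) \<in> decision_space T.
                       loewner_le (var_x M A B x0 w ub K T) \<Sigma>f \<and> mean_x M A B x0 w ub K T = \<mu>f}"
      and h2: "(ub2, K2) \<in> {(ub, K) \<in> decision_space T.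
                       loewner_le (var_x M A B x0 w ub K T) \<Sigma>f \<and> mean_x M A B x0 w ub K T = \<mu>f}"
      and t0: "0 \<le> \<theta>" and t1: "\<theta> \<le> 1"
    define ub where "ub = (\<lambda>t. \<theta> *\<^sub>R ub1 t + (1 - \<theta>) *\<^sub>R ub2 t)"
    define K where "K = (\<lambda>i j. \<theta> *\<^sub>R K1 i j + (1 - \<theta>) *\<^sub>R K2 i j)"
    define Y1 where "Y1 = traj A B x0 w ub1 K1 T"
    define Y2 where "Y2 = traj A B x0 w ub2 K2 T"
    define Y where "Y = traj A B x0 w ub K T"
    have Yeq: "Y \<omega> = \<theta> *\<^sub>R Y1 \<omega> + (1 - \<theta>) *\<^sub>R Y2 \<omega>" for \<omega>
      unfolding Y_def Y1_def Y2_def ub_def K_def by (rule traj_comb)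
    have L1: "vL2 M Y1" and L2': "vL2 M Y2" unfolding Y1_def Y2_def by (rule YL)+
    have i1: "integrable M Y1" and i2: "integrable M Y2"
      using vL2_integrable[OF fm] L1 L2' by blast+
    define m1 where "m1 = mean_x M A B x0 w ub1 K1 T"
    define m2 where "m2 = mean_x M A B x0 w ub2 K2 T"
    define m where "m = mean_x M A B x0 w ub K T"
    have m1d: "m1 = integral\<^sup>L M Y1" unfolding m1_def mean_x_def Y1_def by simp
    have m2d: "m2 = integral\<^sup>L M Y2" unfolding m2_def mean_x_def Y2_def by simp
    have meq: "m = \<theta> *\<^sub>R m1 + (1 - \<theta>) *\<^sub>R m2"
    proof -
      have "m = integral\<^sup>L M (\<lambda>\<omega>. \<theta> *\<^sub>R Y1 \<omega> + (1 - \<theta>) *\<^sub>R Y2 \<omega>)"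
      proof -
        have Yf: "Y = (\<lambda>\<omega>. \<theta> *\<^sub>R Y1 \<omega> + (1 - \<theta>) *\<^sub>R Y2 \<omega>)"
          by (rule ext) (rule Yeq)
        show ?thesis unfolding m_def mean_x_def Y_def[symmetric] Yf ..
      qed
      also have "\<dots> = \<theta> *\<^sub>R m1 + (1 - \<theta>) *\<^sub>R m2"
        using i1 i2 by (simp add: m1d m2d)
      finally show ?thesis .
    qed
    have dec1: "(ub1, K1) \<in> decision_space T" and dec2: "(ub2, K2) \<in> decision_space T"
      and lw1: "loewner_le (var_x M A B x0 w ub1 K1 T) \<Sigma>f"
      and lw2: "loewner_le (var_x M A B x0 w ub2 K2 T) \<Sigma>f"
      and mu1: "m1 = \<mu>f" and mu2: "m2 = \<mu>f"
      using h1 h2 unfolding m1_def m2_def by auto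
    have dec: "(ub, K) \<in> decision_space T"
      using dec1 dec2 unfolding decision_space_def ub_def K_def by auto
    have mf: "m = \<mu>f" using meq mu1 mu2 by (simp add: scaleR_collapse algebra_simps)
    have quad: "v \<bullet> (var_x M A B x0 w ub' K' T *v v)
        = integral\<^sup>L M (\<lambda>x. (v \<bullet> (traj A B x0 w ub' K' T x - mean_x M A B x0 w ub' K' T))^2)"
      for v ub' K'
      unfolding var_x_def
      by (rule quad_integral[OF fm vL2_diff[OF YL vL2_const[OF fm]]])
    have lw: "loewner_le (var_x M A B x0 w ub K T) \<Sigma>f"
      unfolding loewner_le_def psd_def
    proof
      fix v :: "real^'n"
      define a where "a = (\<lambda>x. v \<bullet> (Y1 x - m1))"
      define b where "b = (\<lambda>x. v \<bullet> (Y2 x - m2))"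
      have La: "L2 M a" unfolding a_def
        by (rule vL2_inner[OF fm vL2_diff[OF L1 vL2_const[OF fm]]])
      have Lb: "L2 M b" unfolding b_def
        by (rule vL2_inner[OF fm vL2_diff[OF L2' vL2_const[OF fm]]])
      have ia: "integrable M (\<lambda>x. (a x)^2)" using La unfolding L2_def by simp
      have ib: "integrable M (\<lambda>x. (b x)^2)" using Lb unfolding L2_def by simp
      have qa: "v \<bullet> (var_x M A B x0 w ub1 K1 T *v v) = integral\<^sup>L M (\<lambda>x. (a x)^2)"
        unfolding quad a_def Y1_def m1_def ..
      have qb: "v \<bullet> (var_x M A B x0 w ub2 K2 T *v v) = integral\<^sup>L M (\<lambda>x. (b x)^2)"
        unfolding quad b_def Y2_def m2_def ..
      have comb: "v \<bullet> (Y x - m) = \<theta> * a x + (1 - \<theta>) * b x" for x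
        unfolding a_def b_def Yeq meq by (simp add: algebra_simps inner_diff_right)
      have q: "v \<bullet> (var_x M A B x0 w ub K T *v v) = integral\<^sup>L M (\<lambda>x. (\<theta> * a x + (1 - \<theta>) * b x)^2)"
        unfolding quad Y_def[symmetric] m_def[symmetric] comb ..
      have pwle: "(\<theta> * a x + (1 - \<theta>) * b x)^2 \<le> \<theta> * (a x)^2 + (1 - \<theta>) * (b x)^2" for x
      proof -
        have "\<theta> * (a x)^2 + (1 - \<theta>) * (b x)^2 - (\<theta> * a x + (1 - \<theta>) * b x)^2
              = \<theta> * (1 - \<theta>) * (a x - b x)^2"
          by (simp add: power2_eq_square algebra_simps)
        moreover have "0 \<le> \<theta> * (1 - \<theta>) * (a x - b x)^2" using t0 t1 by simp
        ultimately show ?thesis by linarith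
      qed
      have icomb: "integrable M (\<lambda>x. (\<theta> * a x + (1 - \<theta>) * b x)^2)"
        using L2_add[OF L2_cmult[OF La, of \<theta>] L2_cmult[OF Lb, of "1 - \<theta>"]] unfolding L2_def by simp
      have "integral\<^sup>L M (\<lambda>x. (\<theta> * a x + (1 - \<theta>) * b x)^2)
            \<le> integral\<^sup>L M (\<lambda>x. \<theta> * (a x)^2 + (1 - \<theta>) * (b x)^2)"
        using icomb ia ib pwle by (intro integral_mono) auto
      also have "\<dots> = \<theta> * integral\<^sup>L M (\<lambda>x. (a x)^2) + (1 - \<theta>) * integral\<^sup>L M (\<lambda>x. (b x)^2)"
        using ia ib by simp
      finally have le: "v \<bullet> (var_x M A B x0 w ub K T *v v)
          \<le> \<theta> * (v \<bullet> (var_x M A B x0 w ub1 K1 T *v v)) + (1 - \<theta>) * (v \<bullet> (var_x M A B x0 w ub2 K2 T *v v))"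
        unfolding q qa qb .
      have p1: "0 \<le> v \<bullet> (\<Sigma>f *v v) - v \<bullet> (var_x M A B x0 w ub1 K1 T *v v)"
        using lw1 unfolding loewner_le_def psd_def
        by (metis inner_diff_right matrix_vector_mult_diff_rdistrib)
      have p2: "0 \<le> v \<bullet> (\<Sigma>f *v v) - v \<bullet> (var_x M A B x0 w ub2 K2 T *v v)"
        using lw2 unfolding loewner_le_def psd_def
        by (metis inner_diff_right matrix_vector_mult_diff_rdistrib)
      have "0 \<le> \<theta> * (v \<bullet> (\<Sigma>f *v v) - v \<bullet> (var_x M A B x0 w ub1 K1 T *v v))"
        using p1 t0 by simp
      moreover have "0 \<le> (1 - \<theta>) * (v \<bullet> (\<Sigma>f *v v) - v \<bullet> (var_x M A B x0 w ub2 K2 T *v v))"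
        using p2 t1 by simp
      ultimately have "0 \<le> v \<bullet> (\<Sigma>f *v v) - v \<bullet> (var_x M A B x0 w ub K T *v v)"
        using le by (simp add: algebra_simps)
      then show "0 \<le> v \<bullet> ((\<Sigma>f - var_x M A B x0 w ub K T) *v v)"
        by (simp add: inner_diff_right matrix_vector_mult_diff_rdistrib)
    qed
    show "((\<lambda>t. \<theta> *\<^sub>R ub1 t + (1 - \<theta>) *\<^sub>R ub2 t), (\<lambda>i j. \<theta> *\<^sub>R K1 i j + (1 - \<theta>) *\<^sub>R K2 i j))
          \<in> {(ub, K) \<in> decision_space T.
              loewner_le (var_x M A B x0 w ub K T) \<Sigma>f \<and> mean_x M A B x0 w ub K T = \<mu>f}"
      using dec lw mf unfolding ub_def K_def m_def by simp
  qed
qed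

end
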